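(* Let $d$ be a square-free positive integer, let $E=\mathbb{Q}(\sqrt{-d})$ with ring of integers $\mathcal{O}$, let $p$ be a prime number that splits in $E$, and let $\mathfrak{P}_1,\mathfrak{P}_2$ be the prime ideals of $\mathcal{O}$ lying above $p$. For a positive integer $r$ and $j\in\{1,2\}$, let $L_j^r=\mathfrak{P}_jv_j$ be the unary Hermitian lattice in a one-dimensional Hermitian space $Ev_j$ with $h(v_j)=r/p$. Then for every positive integer $r$ and every positive integer $m$, $L_1^r$ is represented by $I_m$ if and only if $L_2^r$ is represented by $I_m$. In particular, the set of positive integers $r$ with $L_1^r\in\mathfrak{S}_d(1)$ equals the set of positive integers $r$ with $L_2^r\in\mathfrak{S}_d(1)$.
   Context: A Hermitian space is a finite-dimensional $E$-vector space $V$ with a map $h:V\times V\to E$ that is $E$-linear in the first argument and satisfies $h(v,w)=\overline{h(w,v)}$; write $h(v)=h(v,v)$. A Hermitian lattice is a finitely generated $\mathcal{O}$-submodule of such a space; unary means the space is one-dimensional. It is positive definite integral if $h(v)\in\mathbb{Z}_{>0}$ for nonzero $v$ and $h(v,w)\in\mathcal{O}$ for all $v,w$ in it (the lattices $L_j^r$ above are positive definite integral). $I_m$ is $\mathcal{O}^m$ with $h(x,y)=\sum_{i=1}^m x_i\overline{y_i}$. A lattice $L$ is represented by $K$ if there is an injective $\mathcal{O}$-linear map $L\to K$ preserving $h$. $\mathfrak{S}_d(1)$ is the set of positive definite integral unary Hermitian lattices over $\mathcal{O}$ represented by $I_m$ for some $m\geq1$. *)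

theory Defs
  imports Complex_Main "HOL-Computational_Algebra.Polynomial" "HOL-Computational_Algebra.Primes" "HOL-Computational_Algebra.Squarefree"
begin

definition qfield :: "nat \<Rightarrow> complex set" where
  "qfield d = {of_real (of_rat a) + of_real (of_rat b) * \<i> * of_real (sqrt (real d)) | a b. True}"

definition OK :: "nat \<Rightarrow> complex set" where
  "OK d = {z \<in> qfield d. algebraic_int z}"

definition O_ideal :: "nat \<Rightarrow> complex set \<Rightarrow> bool" where
  "O_ideal d I \<longleftrightarrow> I \<subseteq> OK d \<and> 0 \<in> I \<and> (\<forall>x\<in>I. \<forall>y\<in>I. x + y \<in> I)
     \<and> (\<forall>a\<in>OK d. \<forall>x\<in>I. a * x \<in> I)"

definition O_prime_ideal :: "nat \<Rightarrow> complex set \<Rightarrow> bool" where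
  "O_prime_ideal d P \<longleftrightarrow> O_ideal d P \<and> P \<noteq> OK d
     \<and> (\<forall>x\<in>OK d. \<forall>y\<in>OK d. x * y \<in> P \<longrightarrow> x \<in> P \<or> y \<in> P)"

definition ideal_prod :: "nat \<Rightarrow> complex set \<Rightarrow> complex set \<Rightarrow> complex set" where
  "ideal_prod d I J = \<Inter>{K. O_ideal d K \<and> {x * y | x y. x \<in> I \<and> y \<in> J} \<subseteq> K}"

definition principal_ideal :: "nat \<Rightarrow> complex \<Rightarrow> complex set" where
  "principal_ideal d a = {a * x | x. x \<in> OK d}"

definition splits :: "nat \<Rightarrow> nat \<Rightarrow> bool" where
  "splits d p \<longleftrightarrow> (\<exists>P Q. O_prime_ideal d P \<and> O_prime_ideal d Q \<and> P \<noteq> Q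
      \<and> principal_ideal d (of_nat p) = ideal_prod d P Q)"

text \<open>The unary Hermitian lattice L = I v in the space E v with h(v) = c:
  its elements are x v with x in I, and h(x v, y v) = x * cnj y * c.
  It is represented by I_m = O^m (vectors indexed by i < m, zero outside) iff there is
  an injective O-linear map L \<rightarrow> O^m preserving h.\<close>
definition Ovec :: "nat \<Rightarrow> nat \<Rightarrow> (nat \<Rightarrow> complex) set" where
  "Ovec d m = {w. (\<forall>i<m. w i \<in> OK d) \<and> (\<forall>i\<ge>m. w i = 0)}"

definition unary_repr_by_I :: "nat \<Rightarrow> complex set \<Rightarrow> real \<Rightarrow> nat \<Rightarrow> bool" where
  "unary_repr_by_I d I c m \<longleftrightarrow>
     (\<exists>f :: complex \<Rightarrow> (nat \<Rightarrow> complex).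
        f ` I \<subseteq> Ovec d m \<and> inj_on f I
      \<and> (\<forall>x\<in>I. \<forall>y\<in>I. f (x + y) = (\<lambda>i. f x i + f y i))
      \<and> (\<forall>a\<in>OK d. \<forall>x\<in>I. f (a * x) = (\<lambda>i. a * f x i))
      \<and> (\<forall>x\<in>I. \<forall>y\<in>I. (\<Sum>i<m. f x i * cnj (f y i)) = x * cnj y * of_real c))"

definition unary_pos_def_integral :: "nat \<Rightarrow> complex set \<Rightarrow> real \<Rightarrow> bool" where
  "unary_pos_def_integral d I c \<longleftrightarrow>
     (\<forall>x\<in>I. x \<noteq> 0 \<longrightarrow> (\<exists>n::int. n > 0 \<and> x * cnj x * of_real c = of_int n))
   \<and> (\<forall>x\<in>I. \<forall>y\<in>I. x * cnj y * of_real c \<in> OK d)"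

definition in_S1 :: "nat \<Rightarrow> complex set \<Rightarrow> real \<Rightarrow> bool" where
  "in_S1 d I c \<longleftrightarrow> unary_pos_def_integral d I c \<and> (\<exists>m\<ge>1. unary_repr_by_I d I c m)"

end

theory Submission
  imports Defs
begin

lemma qfield_cnj: "z \<in> qfield d \<Longrightarrow> cnj z \<in> qfield d"
proof -
  assume "z \<in> qfield d"
  then obtain a b where z: "z = of_real (of_rat a) + of_real (of_rat b) * \<i> * of_real (sqrt (real d))"
    unfolding qfield_def by blast
  have "cnj z = of_real (of_rat a) + of_real (of_rat (-b)) * \<i> * of_real (sqrt (real d))"
    by (simp add: z of_rat_minus)
  thus ?thesis unfolding qfield_def by blast
qed

lemma OK_cnj: "z \<in> OK d \<Longrightarrow> cnj z \<in> OK d"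
  unfolding OK_def using qfield_cnj by auto

lemma OK_cnj_iff: "cnj z \<in> OK d \<longleftrightarrow> z \<in> OK d"
  using OK_cnj[of z d] OK_cnj[of "cnj z" d] by auto

lemma int_OK: "(of_int n :: complex) \<in> OK d"
proof -
  have "(of_int n :: complex) = of_real (of_rat (of_int n)) + of_real (of_rat 0) * \<i> * of_real (sqrt (real d))"
    by simp
  hence "(of_int n :: complex) \<in> qfield d" unfolding qfield_def by blast
  moreover have "algebraic_int (of_int n :: complex)" by (rule int_imp_algebraic_int) simp
  ultimately show ?thesis unfolding OK_def by blast
qed

lemma qfield_trace_norm:
  assumes "z \<in> qfield d"
  shows "z + cnj z \<in> \<rat>" "cnj z * z \<in> \<rat>"
proof -
  obtain a b where z: "z = of_real (of_rat a) + of_real (of_rat b) * \<i> * of_real (sqrt (real d))"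
    using assms unfolding qfield_def by blast
  have "z + cnj z = of_real (of_rat (2 * a))"
    by (simp add: z complex_eq_iff of_rat_mult)
  thus "z + cnj z \<in> \<rat>" by simp
  have "cnj z * z = of_real (of_rat (a * a + of_nat d * b * b))"
    by (simp add: z complex_eq_iff of_rat_mult of_rat_add algebra_simps)
  thus "cnj z * z \<in> \<rat>" by simp
qed

lemma cnj_prime_ideal:
  assumes "O_prime_ideal d P"
  shows "O_prime_ideal d (cnj ` P)"
proof -
  have I: "O_ideal d P" and ne: "P \<noteq> OK d"
    and pr: "\<forall>x\<in>OK d. \<forall>y\<in>OK d. x * y \<in> P \<longrightarrow> x \<in> P \<or> y \<in> P"
    using assms unfolding O_prime_ideal_def by auto
  have sub: "P \<subseteq> OK d" and z: "0 \<in> P" and add: "\<forall>x\<in>P. \<forall>y\<in>P. x + y \<in> P"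
    and mul: "\<forall>a\<in>OK d. \<forall>x\<in>P. a * x \<in> P" using I unfolding O_ideal_def by auto
  have mem: "x \<in> cnj ` P \<longleftrightarrow> cnj x \<in> P" for x
    by (metis complex_cnj_cnj image_iff)
  have "O_ideal d (cnj ` P)"
    unfolding O_ideal_def
  proof (intro conjI ballI)
    show "cnj ` P \<subseteq> OK d" using sub OK_cnj by auto
    show "0 \<in> cnj ` P" using z mem by simp
    fix x y assume "x \<in> cnj ` P" "y \<in> cnj ` P"
    thus "x + y \<in> cnj ` P" using add mem by simp
  next
    fix a x assume "a \<in> OK d" "x \<in> cnj ` P"
    thus "a * x \<in> cnj ` P" using mul mem OK_cnj by simp
  qed
  moreover have "cnj ` P \<noteq> OK d"
  proof
    assume "cnj ` P = OK d"
    hence "x \<in> P \<longleftrightarrow> x \<in> OK d" for x using mem[of "cnj x"] OK_cnj_iff[of x d] by simp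
    hence "P = OK d" by blast
    thus False using ne by simp
  qed
  moreover have "\<forall>x\<in>OK d. \<forall>y\<in>OK d. x * y \<in> cnj ` P \<longrightarrow> x \<in> cnj ` P \<or> y \<in> cnj ` P"
    using pr mem OK_cnj by simp
  ultimately show ?thesis unfolding O_prime_ideal_def by blast
qed

lemma int_in_prime_ideal:
  assumes "O_prime_ideal d P" "prime p" "of_nat p \<in> P" "of_int n \<in> P"
  shows "int p dvd n"
proof (rule ccontr)
  assume nd: "\<not> int p dvd n"
  have I: "O_ideal d P" and ne: "P \<noteq> OK d"
    using assms unfolding O_prime_ideal_def by auto
  have sub: "P \<subseteq> OK d" and add: "\<forall>x\<in>P. \<forall>y\<in>P. x + y \<in> P"
    and mul: "\<forall>a\<in>OK d. \<forall>x\<in>P. a * x \<in> P" using I unfolding O_ideal_def by auto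
  have "prime (int p)" using assms(2) by simp
  hence "coprime (int p) n" using nd prime_imp_coprime by blast
  hence g: "gcd n (int p) = 1" by (simp add: coprime_iff_gcd_eq_1 gcd.commute)
  obtain u v where uv: "u * n + v * int p = gcd n (int p)" using bezout_int by blast
  hence uv1: "u * n + v * int p = 1" using g by simp
  have "(of_int u :: complex) * of_int n \<in> P" using mul int_OK assms(4) by blast
  moreover have "(of_int v :: complex) * of_nat p \<in> P" using mul int_OK assms(3) by blast
  ultimately have "(of_int u :: complex) * of_int n + of_int v * of_nat p \<in> P" using add by blast
  also have "(of_int u :: complex) * of_int n + of_int v * of_nat p = of_int (u * n + v * int p)"
    by simp
  finally have one: "1 \<in> P" using uv1 by simp
  have "OK d \<subseteq> P"
  proof
    fix a assume "a \<in> OK d"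
    hence "a * 1 \<in> P" using mul one by blast
    thus "a \<in> P" by simp
  qed
  thus False using sub ne by blast
qed


lemma invariant_sub:
  assumes A: "O_prime_ideal d A" and inv: "cnj ` A = A" and pA: "of_nat p \<in> A"
    and B: "O_prime_ideal d B" and pB: "of_nat p \<in> B" and pr: "prime p" and x: "x \<in> A"
  shows "x \<in> B"
proof -
  have subA: "A \<subseteq> OK d" and addA: "\<forall>x\<in>A. \<forall>y\<in>A. x + y \<in> A"
    and mulA: "\<forall>a\<in>OK d. \<forall>x\<in>A. a * x \<in> A" using A unfolding O_prime_ideal_def O_ideal_def by auto
  have subB: "B \<subseteq> OK d" and addB: "\<forall>x\<in>B. \<forall>y\<in>B. x + y \<in> B"
    and mulB: "\<forall>a\<in>OK d. \<forall>x\<in>B. a * x \<in> B"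
    and prB: "\<forall>x\<in>OK d. \<forall>y\<in>OK d. x * y \<in> B \<longrightarrow> x \<in> B \<or> y \<in> B"
    using B unfolding O_prime_ideal_def O_ideal_def by auto
  have xO: "x \<in> OK d" using x subA by blast
  have cx: "cnj x \<in> A" using x inv by blast
  have T: "x + cnj x \<in> A" using addA x cx by blast
  have N: "cnj x * x \<in> A" using mulA x OK_cnj xO by blast
  have xq: "x \<in> qfield d" using xO unfolding OK_def by blast
  have "x + cnj x \<in> \<int>"
    using rational_algebraic_int_is_int qfield_trace_norm(1)[OF xq] T subA unfolding OK_def by blast
  then obtain t where t: "x + cnj x = of_int t" by (auto elim: Ints_cases)
  have "cnj x * x \<in> \<int>"
    using rational_algebraic_int_is_int qfield_trace_norm(2)[OF xq] N subA unfolding OK_def by blast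
  then obtain n where n: "cnj x * x = of_int n" by (auto elim: Ints_cases)
  have "int p dvd t" using int_in_prime_ideal[OF A pr pA] T t by simp
  then obtain t' where t': "t = int p * t'" by (auto elim: dvdE)
  have "int p dvd n" using int_in_prime_ideal[OF A pr pA] N n by simp
  then obtain n' where n': "n = int p * n'" by (auto elim: dvdE)
  have eq: "x * x = (of_int t' * x) * of_nat p + (of_int (- n')) * of_nat p"
  proof -
    have "x * x = (x + cnj x) * x - cnj x * x" by (simp add: algebra_simps)
    also have "\<dots> = of_int t * x - of_int n" using t n by simp
    finally show ?thesis using t' n' by (simp add: algebra_simps)
  qed
  have tx: "of_int t' * x \<in> OK d" using mulA int_OK x subA by blast
  have "(of_int t' * x) * of_nat p \<in> B" using mulB tx pB by blast
  moreover have "(of_int (- n') :: complex) * of_nat p \<in> B" using mulB int_OK pB by blast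
  ultimately have "(of_int t' * x) * of_nat p + (of_int (- n')) * of_nat p \<in> B" using addB by blast
  hence "x * x \<in> B" by (simp only: eq)
  thus ?thesis using prB xO by blast
qed

lemma conj_swap:
  assumes S: "{P. O_prime_ideal d P \<and> of_nat p \<in> P} = {P1, P2}" and ne: "P1 \<noteq> P2"
    and pr: "prime p"
  shows "cnj ` P1 = P2"
proof -
  have P1: "O_prime_ideal d P1" "of_nat p \<in> P1" and P2: "O_prime_ideal d P2" "of_nat p \<in> P2"
    using S by blast+
  have cc: "cnj ` cnj ` X = X" for X :: "complex set" by (simp add: image_image)
  have "of_nat p \<in> cnj ` P1" using P1(2) image_eqI[of "of_nat p" cnj "of_nat p"] by simp
  hence "cnj ` P1 \<in> {P. O_prime_ideal d P \<and> of_nat p \<in> P}"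
    using cnj_prime_ideal[OF P1(1)] by blast
  hence "cnj ` P1 \<in> {P1, P2}" by (simp only: S)
  have "of_nat p \<in> cnj ` P2" using P2(2) image_eqI[of "of_nat p" cnj "of_nat p"] by simp
  hence "cnj ` P2 \<in> {P. O_prime_ideal d P \<and> of_nat p \<in> P}"
    using cnj_prime_ideal[OF P2(1)] by blast
  hence "cnj ` P2 \<in> {P1, P2}" by (simp only: S)
  show ?thesis
  proof (rule ccontr)
    assume "cnj ` P1 \<noteq> P2"
    hence i1: "cnj ` P1 = P1" using \<open>cnj ` P1 \<in> {P1, P2}\<close> by blast
    have i2: "cnj ` P2 = P2"
    proof (rule ccontr)
      assume "cnj ` P2 \<noteq> P2"
      hence "cnj ` P2 = P1" using \<open>cnj ` P2 \<in> {P1, P2}\<close> by blast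
      hence "P2 = cnj ` P1" using cc by metis
      thus False using i1 ne by simp
    qed
    have "P1 \<subseteq> P2" using invariant_sub[OF P1(1) i1 P1(2) P2(1) P2(2) pr] by blast
    moreover have "P2 \<subseteq> P1" using invariant_sub[OF P2(1) i2 P2(2) P1(1) P1(2) pr] by blast
    ultimately show False using ne by blast
  qed
qed

lemma repr_transfer:
  assumes "unary_repr_by_I d I c m"
  shows "unary_repr_by_I d (cnj ` I) c m"
proof -
  obtain f where f1: "f ` I \<subseteq> Ovec d m" and f2: "inj_on f I"
    and f3: "\<forall>x\<in>I. \<forall>y\<in>I. f (x + y) = (\<lambda>i. f x i + f y i)"
    and f4: "\<forall>a\<in>OK d. \<forall>x\<in>I. f (a * x) = (\<lambda>i. a * f x i)"
    and f5: "\<forall>x\<in>I. \<forall>y\<in>I. (\<Sum>i<m. f x i * cnj (f y i)) = x * cnj y * of_real c"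
    using assms unfolding unary_repr_by_I_def by blast
  define g where "g x = (\<lambda>i. cnj (f (cnj x) i))" for x
  have mem: "x \<in> cnj ` I \<longleftrightarrow> cnj x \<in> I" for x
    by (metis complex_cnj_cnj image_iff)
  show ?thesis unfolding unary_repr_by_I_def
  proof (intro exI[of _ g] conjI ballI)
    show "g ` cnj ` I \<subseteq> Ovec d m"
    proof
      fix w assume "w \<in> g ` cnj ` I"
      then obtain x where x: "x \<in> I" "w = g (cnj x)" by blast
      have "f x \<in> Ovec d m" using f1 x by blast
      thus "w \<in> Ovec d m" using x unfolding Ovec_def g_def by (auto simp: OK_cnj)
    qed
    show "inj_on g (cnj ` I)"
    proof
      fix x y assume xy: "x \<in> cnj ` I" "y \<in> cnj ` I" "g x = g y"
      have "f (cnj x) = f (cnj y)"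
      proof
        fix i show "f (cnj x) i = f (cnj y) i" using fun_cong[OF xy(3), of i] unfolding g_def by simp
      qed
      hence "cnj x = cnj y" using f2 xy mem unfolding inj_on_def by blast
      thus "x = y" by simp
    qed
  next
    fix x y assume "x \<in> cnj ` I" "y \<in> cnj ` I"
    thus "g (x + y) = (\<lambda>i. g x i + g y i)" using f3 mem unfolding g_def by simp
  next
    fix a x assume "a \<in> OK d" "x \<in> cnj ` I"
    thus "g (a * x) = (\<lambda>i. a * g x i)" using f4 mem OK_cnj unfolding g_def by simp
  next
    fix x y assume xy: "x \<in> cnj ` I" "y \<in> cnj ` I"
    have "(\<Sum>i<m. g x i * cnj (g y i)) = cnj (\<Sum>i<m. f (cnj x) i * cnj (f (cnj y) i))"
      unfolding g_def by (simp add: cnj_sum)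
    also have "\<dots> = cnj (cnj x * cnj (cnj y) * of_real c)" using f5 xy mem by simp
    also have "\<dots> = x * cnj y * of_real c" by simp
    finally show "(\<Sum>i<m. g x i * cnj (g y i)) = x * cnj y * of_real c" .
  qed
qed

lemma pdi_transfer:
  assumes "unary_pos_def_integral d I c"
  shows "unary_pos_def_integral d (cnj ` I) c"
proof -
  have mem: "x \<in> cnj ` I \<longleftrightarrow> cnj x \<in> I" for x
    by (metis complex_cnj_cnj image_iff)
  have a1: "\<forall>x\<in>I. x \<noteq> 0 \<longrightarrow> (\<exists>n::int. n > 0 \<and> x * cnj x * of_real c = of_int n)"
    and a2: "\<forall>x\<in>I. \<forall>y\<in>I. x * cnj y * of_real c \<in> OK d"
    using assms unfolding unary_pos_def_integral_def by auto
  have "\<exists>n::int. n > 0 \<and> x * cnj x * of_real c = of_int n" if "x \<in> cnj ` I" "x \<noteq> 0" for x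
  proof -
    have cx: "cnj x \<in> I" using that(1) mem by blast
    have "cnj x \<noteq> 0" using that(2) by simp
    then obtain n :: int where "n > 0" "cnj x * cnj (cnj x) * of_real c = of_int n"
      using a1 cx by blast
    thus ?thesis by (intro exI[of _ n]) (simp add: mult.commute)
  qed
  moreover have "x * cnj y * of_real c \<in> OK d" if "x \<in> cnj ` I" "y \<in> cnj ` I" for x y
  proof -
    have "cnj x * cnj (cnj y) * of_real c \<in> OK d" using a2 that mem by blast
    hence "cnj (cnj x * cnj (cnj y) * of_real c) \<in> OK d" by (rule OK_cnj)
    thus ?thesis by simp
  qed
  ultimately show ?thesis unfolding unary_pos_def_integral_def by blast
qed

theorem lemma2:
  fixes d p :: nat and P1 P2 :: "complex set"
  assumes "d > 0" and "squarefree d"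
    and "prime p" and "splits d p"
    and "{P. O_prime_ideal d P \<and> of_nat p \<in> P} = {P1, P2}" and "P1 \<noteq> P2"
  shows "(\<forall>r m :: nat. r > 0 \<longrightarrow> m > 0 \<longrightarrow>
            (unary_repr_by_I d P1 (real r / real p) m \<longleftrightarrow> unary_repr_by_I d P2 (real r / real p) m))
       \<and> {r :: nat. r > 0 \<and> in_S1 d P1 (real r / real p)}
           = {r :: nat. r > 0 \<and> in_S1 d P2 (real r / real p)}"
proof -
  have e1: "cnj ` P1 = P2" using conj_swap[OF assms(5) assms(6) assms(3)] .
  have e2: "cnj ` P2 = P1" using e1 by (auto simp: image_image)
  have R: "unary_repr_by_I d P1 c m \<longleftrightarrow> unary_repr_by_I d P2 c m" for c m
    using repr_transfer[of d P1 c m] repr_transfer[of d P2 c m] unfolding e1 e2 by blast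
  have S: "in_S1 d P1 c \<longleftrightarrow> in_S1 d P2 c" for c
  proof -
    have "unary_pos_def_integral d P1 c \<longleftrightarrow> unary_pos_def_integral d P2 c"
      using pdi_transfer[of d P1 c] pdi_transfer[of d P2 c] unfolding e1 e2 by blast
    thus ?thesis unfolding in_S1_def using R by simp
  qed
  show ?thesis using R S by simp
qed

end
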